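(* Let $n\ge 1$ and $m\ge 1$. For any $\textsc{P}$-layers $L_1,\dots,L_m$ and any $\textsc{C}$-layers $C_1,\dots,C_m$ on $n$ qubits, there exist a $\textsc{P}$-layer $L'$, a $\textsc{CZ}$-layer $Z'$ and a $\textsc{C}$-layer $C'$ on $n$ qubits such that $$C_m L_m C_{m-1}L_{m-1}\cdots C_1 L_1 \;=\; C'\,Z'\,L'$$ as exact unitary matrices. In stage notation: $(\text{-P-C-})^m = \text{-P-CZ-C-}$.
   Context: Gates: $\textsc{H}=\frac{1}{\sqrt2}\begin{pmatrix}1&1\\1&-1\end{pmatrix}$, $\textsc{P}=\mathrm{diag}(1,i)$, $\textsc{CNOT}|a,b\rangle=|a,a\oplus b\rangle$, $\textsc{CZ}|a,b\rangle=(-1)^{ab}|a,b\rangle$. Layers on $n$ qubits: an $\textsc{H}$-layer is $\bigotimes_{j=1}^n \textsc{H}^{b_j}$ with $b_j\in\{0,1\}$; a $\textsc{P}$-layer is $\bigotimes_{j=1}^n \textsc{P}^{a_j}$ with $a_j\in\{0,1,2,3\}$; a $\textsc{C}$-layer is any unitary implemented by a circuit of $\textsc{CNOT}$ gates (equivalently $|x\rangle\mapsto|Ax\rangle$ for an invertible $n\times n$ matrix $A$ over $\mathbb F_2$); a $\textsc{CZ}$-layer is any product of $\textsc{CZ}$ gates (acting on arbitrary pairs of the $n$ qubits). Stage notation such as -X-Y-Z- denotes a circuit in which stage X is applied first, then Y, then Z, i.e. the operator product $ZYX$. *)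

theory Defs
  imports Complex_Main
begin

text \<open>Operators on n qubits are represented as matrices indexed by computational
basis states. A basis state is a bit vector x :: nat => bool with x j = False for
all j >= n (bit j is the state of qubit j). Entry A x y is the coefficient of
the basis state x in the image of the basis state y.\<close>

type_synonym op = "(nat \<Rightarrow> bool) \<Rightarrow> (nat \<Rightarrow> bool) \<Rightarrow> complex"

definition basis :: "nat \<Rightarrow> (nat \<Rightarrow> bool) set" where
  "basis n = {x. \<forall>j\<ge>n. \<not> x j}"

definition op_mult :: "nat \<Rightarrow> op \<Rightarrow> op \<Rightarrow> op" where
  "op_mult n A B = (\<lambda>x y. \<Sum>z\<in>basis n. A x z * B z y)"

definition op_id :: op where
  "op_id = (\<lambda>x y. if x = y then 1 else 0)"

definition op_eq :: "nat \<Rightarrow> op \<Rightarrow> op \<Rightarrow> bool" where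
  "op_eq n A B \<longleftrightarrow> (\<forall>x\<in>basis n. \<forall>y\<in>basis n. A x y = B x y)"

text \<open>P-layer: tensor product of P^(a j), P = diag(1,i).\<close>
definition P_layer :: "nat \<Rightarrow> (nat \<Rightarrow> nat) \<Rightarrow> op" where
  "P_layer n a = (\<lambda>x y. if x = y then (\<Prod>j<n. \<i> ^ (a j * (if x j then 1 else 0))) else 0)"

definition is_P_layer :: "nat \<Rightarrow> op \<Rightarrow> bool" where
  "is_P_layer n U \<longleftrightarrow> (\<exists>a. (\<forall>j<n. a j < 4) \<and> U = P_layer n a)"

definition CNOT :: "nat \<Rightarrow> nat \<Rightarrow> op" where
  "CNOT c t = (\<lambda>x y. if x = y(t := (y t \<noteq> y c)) then 1 else 0)"

definition CZ :: "nat \<Rightarrow> nat \<Rightarrow> op" where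
  "CZ j k = (\<lambda>x y. if x = y then (if x j \<and> x k then -1 else 1) else 0)"

text \<open>Product of a list of gates; the head of the list is applied last.\<close>
fun gate_prod :: "nat \<Rightarrow> op list \<Rightarrow> op" where
  "gate_prod n [] = op_id"
| "gate_prod n (G # Gs) = op_mult n G (gate_prod n Gs)"

definition is_C_layer :: "nat \<Rightarrow> op \<Rightarrow> bool" where
  "is_C_layer n U \<longleftrightarrow> (\<exists>gs. (\<forall>(c,t)\<in>set gs. c < n \<and> t < n \<and> c \<noteq> t)
      \<and> U = gate_prod n (map (\<lambda>(c,t). CNOT c t) gs))"

definition is_CZ_layer :: "nat \<Rightarrow> op \<Rightarrow> bool" where
  "is_CZ_layer n U \<longleftrightarrow> (\<exists>gs. (\<forall>(j,k)\<in>set gs. j < n \<and> k < n \<and> j \<noteq> k)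
      \<and> U = gate_prod n (map (\<lambda>(j,k). CZ j k) gs))"

text \<open>(-P-C-)^k with layers L 0, C 0, ..., L (k-1), C (k-1):
  the operator C_(k-1) L_(k-1) ... C_0 L_0.\<close>
fun PC_prod :: "nat \<Rightarrow> (nat \<Rightarrow> op) \<Rightarrow> (nat \<Rightarrow> op) \<Rightarrow> nat \<Rightarrow> op" where
  "PC_prod n L C 0 = op_id"
| "PC_prod n L C (Suc k) = op_mult n (C k) (op_mult n (L k) (PC_prod n L C k))"

end

theory Submission
  imports Defs
begin

definition mop :: "((nat \<Rightarrow> bool) \<Rightarrow> (nat \<Rightarrow> bool)) \<Rightarrow> ((nat \<Rightarrow> bool) \<Rightarrow> complex) \<Rightarrow> op" where
  "mop \<sigma> \<phi> = (\<lambda>x y. if x = \<sigma> y then \<phi> y else 0)"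

definition cn :: "nat \<Rightarrow> nat \<Rightarrow> (nat \<Rightarrow> bool) \<Rightarrow> (nat \<Rightarrow> bool)" where
  "cn c t y = y(t := (y t \<noteq> y c))"

fun cnl :: "(nat \<times> nat) list \<Rightarrow> (nat \<Rightarrow> bool) \<Rightarrow> (nat \<Rightarrow> bool)" where
  "cnl [] = id"
| "cnl ((c,t)#gs) = cn c t \<circ> cnl gs"

definition czf :: "nat \<Rightarrow> nat \<Rightarrow> (nat \<Rightarrow> bool) \<Rightarrow> complex" where
  "czf j k y = (if y j \<and> y k then -1 else 1)"

fun czl :: "(nat \<times> nat) list \<Rightarrow> (nat \<Rightarrow> bool) \<Rightarrow> complex" where
  "czl [] y = 1"
| "czl ((j,k)#zs) y = czf j k y * czl zs y"

definition pph :: "nat \<Rightarrow> (nat \<Rightarrow> nat) \<Rightarrow> (nat \<Rightarrow> bool) \<Rightarrow> complex" where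
  "pph n a y = (\<Prod>j<n. \<i> ^ (a j * (if y j then 1 else 0)))"

definition vl :: "nat \<Rightarrow> (nat \<times> nat) list \<Rightarrow> bool" where
  "vl n gs \<longleftrightarrow> (\<forall>(c,t)\<in>set gs. c < n \<and> t < n \<and> c \<noteq> t)"

definition good :: "nat \<Rightarrow> ((nat \<Rightarrow> bool) \<Rightarrow> complex) \<Rightarrow> bool" where
  "good n \<phi> \<longleftrightarrow> (\<exists>a zs. (\<forall>j<n. a j < 4) \<and> vl n zs \<and> (\<forall>y\<in>basis n. \<phi> y = pph n a y * czl zs y))"

lemma i_pow_mod4: "\<i> ^ k = \<i> ^ (k mod 4)"
proof -
  have i4: "\<i> ^ 4 = (1::complex)" by (simp add: numeral_eq_Suc)
  have "\<i> ^ k = \<i> ^ (4 * (k div 4) + k mod 4)" by simp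
  also have "\<dots> = (\<i> ^ 4) ^ (k div 4) * \<i> ^ (k mod 4)" by (simp only: power_add power_mult)
  also have "\<dots> = \<i> ^ (k mod 4)" by (simp only: i4 power_one mult_1_left)
  finally show ?thesis .
qed

lemma finite_basis: "finite (basis n)"
proof -
  have "basis n \<subseteq> (\<lambda>S j. j \<in> S) ` Pow {..<n}"
  proof
    fix x assume "x \<in> basis n"
    then have "{j. x j} \<subseteq> {..<n}" unfolding basis_def by (auto simp: not_le[symmetric])
    moreover have "x = (\<lambda>j. j \<in> {j. x j})" by simp
    ultimately show "x \<in> (\<lambda>S j. j \<in> S) ` Pow {..<n}" by blast
  qed
  then show ?thesis by (rule finite_subset) simp
qed

lemma mult_mop:
  assumes "\<tau> y \<in> basis n"
  shows "op_mult n (mop \<sigma> \<phi>) (mop \<tau> \<psi>) x y = mop (\<sigma> \<circ> \<tau>) (\<lambda>y. \<phi> (\<tau> y) * \<psi> y) x y"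
proof -
  have "op_mult n (mop \<sigma> \<phi>) (mop \<tau> \<psi>) x y =
     (\<Sum>z\<in>basis n. if z = \<tau> y then (if x = \<sigma> z then \<phi> z else 0) * \<psi> y else 0)"
    unfolding op_mult_def mop_def by (rule sum.cong) auto
  also have "\<dots> = (if x = \<sigma> (\<tau> y) then \<phi> (\<tau> y) else 0) * \<psi> y"
    using assms finite_basis by simp
  finally show ?thesis by (simp add: mop_def)
qed

lemma op_eq_mult_mop:
  assumes "\<forall>y\<in>basis n. \<tau> y \<in> basis n"
  shows "op_eq n (op_mult n (mop \<sigma> \<phi>) (mop \<tau> \<psi>)) (mop (\<sigma> \<circ> \<tau>) (\<lambda>y. \<phi> (\<tau> y) * \<psi> y))"
  using assms mult_mop unfolding op_eq_def by blast

lemma op_eq_mult_mop':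
  assumes "\<forall>y\<in>basis n. \<tau> y \<in> basis n" "\<rho> = \<sigma> \<circ> \<tau>" "\<And>y. \<chi> y = \<phi> (\<tau> y) * \<psi> y"
  shows "op_eq n (op_mult n (mop \<sigma> \<phi>) (mop \<tau> \<psi>)) (mop \<rho> \<chi>)"
proof -
  have "\<chi> = (\<lambda>y. \<phi> (\<tau> y) * \<psi> y)" using assms(3) by auto
  then show ?thesis using op_eq_mult_mop[OF assms(1), of \<sigma> \<phi> \<psi>] assms(2) by simp
qed

lemma op_eq_mult:
  "op_eq n A A' \<Longrightarrow> op_eq n B B' \<Longrightarrow> op_eq n (op_mult n A B) (op_mult n A' B')"
  unfolding op_eq_def op_mult_def by (auto intro!: sum.cong)

lemma op_eq_refl: "op_eq n A A" by (simp add: op_eq_def)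
lemma op_eq_trans: "op_eq n A B \<Longrightarrow> op_eq n B C \<Longrightarrow> op_eq n A C" by (simp add: op_eq_def)

lemma op_eq_mop_cong: "(\<forall>y\<in>basis n. \<phi> y = \<psi> y) \<Longrightarrow> op_eq n (mop \<sigma> \<phi>) (mop \<sigma> \<psi>)"
  by (simp add: op_eq_def mop_def)

lemma cn_basis: "t < n \<Longrightarrow> y \<in> basis n \<Longrightarrow> cn c t y \<in> basis n"
  unfolding basis_def cn_def by auto

lemma cnl_basis: "vl n gs \<Longrightarrow> y \<in> basis n \<Longrightarrow> cnl gs y \<in> basis n"
proof (induction gs arbitrary: y)
  case Nil then show ?case by simp
next
  case (Cons g gs) then show ?case
    by (cases g) (auto simp: vl_def intro!: cn_basis)
qed

lemma cnl_append: "cnl (gs @ hs) = cnl gs \<circ> cnl hs"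
  by (induction gs rule: cnl.induct) auto

lemma cnot_sem: "vl n gs \<Longrightarrow> op_eq n (gate_prod n (map (\<lambda>(c,t). CNOT c t) gs)) (mop (cnl gs) (\<lambda>_. 1))"
proof (induction gs)
  case Nil then show ?case by (simp add: op_eq_def op_id_def mop_def)
next
  case (Cons g gs)
  obtain c t where g: "g = (c,t)" by (cases g)
  have v: "vl n gs" using Cons.prems by (simp add: vl_def)
  have "CNOT c t = mop (cn c t) (\<lambda>_. 1)" by (auto simp: CNOT_def mop_def cn_def fun_eq_iff)
  then have "op_eq n (gate_prod n (map (\<lambda>(c,t). CNOT c t) (g#gs))) (op_mult n (mop (cn c t) (\<lambda>_. 1)) (mop (cnl gs) (\<lambda>_. 1)))"
    using g op_eq_mult[OF op_eq_refl Cons.IH[OF v], of "CNOT c t"] by simp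
  moreover have "op_eq n (op_mult n (mop (cn c t) (\<lambda>_. 1)) (mop (cnl gs) (\<lambda>_. 1))) (mop (cn c t \<circ> cnl gs) (\<lambda>y. 1 * 1))"
    by (rule op_eq_mult_mop) (use cnl_basis v in blast)
  ultimately show ?case using g by (simp only: list.map prod.case gate_prod.simps cnl.simps mult_1_left) (rule op_eq_trans)
qed

lemma cz_sem: "op_eq n (gate_prod n (map (\<lambda>(j,k). CZ j k) zs)) (mop id (czl zs))"
proof (induction zs)
  case Nil then show ?case by (simp add: op_eq_def op_id_def mop_def)
next
  case (Cons g zs)
  obtain j k where g: "g = (j,k)" by (cases g)
  have "CZ j k = mop id (czf j k)" by (auto simp: CZ_def mop_def czf_def fun_eq_iff)
  then have "op_eq n (gate_prod n (map (\<lambda>(j,k). CZ j k) (g#zs))) (op_mult n (mop id (czf j k)) (mop id (czl zs)))"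
    using g op_eq_mult[OF op_eq_refl Cons.IH, of "CZ j k"] \<open>CZ j k = _\<close>
    by (simp only: list.map prod.case gate_prod.simps)
  moreover have "op_eq n (op_mult n (mop id (czf j k)) (mop id (czl zs))) (mop id (czl (g#zs)))"
    by (rule op_eq_mult_mop') (auto simp: g)
  ultimately show ?case by (rule op_eq_trans)
qed

lemma P_mop: "P_layer n a = mop id (pph n a)"
  by (auto simp: P_layer_def mop_def pph_def fun_eq_iff)

lemma good_ext: "good n \<phi> \<Longrightarrow> (\<forall>y\<in>basis n. \<psi> y = \<phi> y) \<Longrightarrow> good n \<psi>"
  unfolding good_def by metis

lemma czl_append: "czl (zs @ ws) y = czl zs y * czl ws y"
  by (induction zs) auto

lemma pph_add: "pph n (\<lambda>j. (a j + b j) mod 4) y = pph n a y * pph n b y"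
proof -
  have "\<i> ^ ((a j + b j) mod 4 * (if y j then 1 else 0)) =
        \<i> ^ (a j * (if y j then 1 else 0)) * \<i> ^ (b j * (if y j then 1 else 0))" for j
    using i_pow_mod4[of "a j + b j"] by (simp add: power_add)
  then show ?thesis unfolding pph_def by (simp add: prod.distrib)
qed

lemma good_mult: "good n \<phi> \<Longrightarrow> good n \<psi> \<Longrightarrow> good n (\<lambda>y. \<phi> y * \<psi> y)"
proof -
  assume "good n \<phi>" "good n \<psi>"
  then obtain a zs b ws where h: "\<forall>j<n. a j < 4" "vl n zs" "\<forall>y\<in>basis n. \<phi> y = pph n a y * czl zs y"
    "\<forall>j<n. b j < 4" "vl n ws" "\<forall>y\<in>basis n. \<psi> y = pph n b y * czl ws y"
    unfolding good_def by blast
  show ?thesis unfolding good_def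
    apply (rule exI[of _ "\<lambda>j. (a j + b j) mod 4"], rule exI[of _ "zs @ ws"])
    using h by (auto simp: vl_def pph_add czl_append)
qed

lemma pph_zero: "pph n (\<lambda>_. 0) y = 1" by (simp add: pph_def)

lemma good_one: "good n (\<lambda>_. 1)"
  unfolding good_def by (rule exI[of _ "\<lambda>_. 0"], rule exI[of _ "[]"]) (simp add: vl_def pph_zero)

lemma good_pow: "good n \<phi> \<Longrightarrow> good n (\<lambda>y. \<phi> y ^ e)"
  by (induction e) (auto intro: good_one good_mult)

lemma good_prod: "(\<forall>j<(m::nat). good n (f j)) \<Longrightarrow> good n (\<lambda>y. \<Prod>j<m. f j y)"
  by (induction m) (auto intro: good_one good_mult)

lemma atom_good:
  assumes "j < n" shows "good n (\<lambda>y. \<i> ^ (e * (if y j then 1 else 0)))"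
proof -
  let ?a = "\<lambda>l. if l = j then e mod 4 else 0"
  have "pph n ?a y = \<i> ^ (e * (if y j then 1 else 0))" for y
  proof -
    have "pph n ?a y = (\<Prod>l<n. if l = j then \<i> ^ (e mod 4 * (if y j then 1 else 0)) else 1)"
      unfolding pph_def by (rule prod.cong) auto
    also have "\<dots> = \<i> ^ (e mod 4 * (if y j then 1 else 0))" using assms by simp
    also have "\<dots> = \<i> ^ (e * (if y j then 1 else 0))" using i_pow_mod4[of e] by simp
    finally show ?thesis .
  qed
  then show ?thesis unfolding good_def
    by (intro exI[of _ ?a] exI[of _ "[]"]) (simp add: vl_def)
qed

lemma cz_good: "j < n \<Longrightarrow> k < n \<Longrightarrow> j \<noteq> k \<Longrightarrow> good n (czf j k)"
  unfolding good_def
  by (intro exI[of _ "\<lambda>_. 0"] exI[of _ "[(j,k)]"]) (simp add: vl_def pph_zero)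

lemma iid: "\<i> ^ e * \<i> ^ e * (-1) ^ e = (1::complex)"
proof -
  have "\<i> ^ e * \<i> ^ e = (\<i> * \<i>) ^ e" by (simp only: power_mult_distrib)
  then have "\<i> ^ e * \<i> ^ e * (-1) ^ e = ((-1) * (-1::complex)) ^ e" by (simp add: power_mult_distrib)
  then show ?thesis by simp
qed

lemma atom_subst:
  assumes "j < n" "c < n" "t < n" "c \<noteq> t"
  shows "good n (\<lambda>y. \<i> ^ (e * (if cn c t y j then 1 else 0)))"
proof (cases "j = t")
  case False
  then show ?thesis using atom_good[OF assms(1)] by (simp add: cn_def)
next
  case True
  have eq: "\<i> ^ (e * (if cn c t y j then 1 else 0)) =
     \<i> ^ (e * (if y t then 1 else 0)) * \<i> ^ (e * (if y c then 1 else 0)) * czf t c y ^ e" for y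
    using True iid[of e] by (cases "y t"; cases "y c") (auto simp: cn_def czf_def)
  show ?thesis
    unfolding eq
    by (intro good_mult good_pow atom_good cz_good) (use assms in auto)
qed

lemma i2: "\<i> ^ (2 * (if b then 1 else 0)) = (if b then -1 else (1::complex))"
  by simp

lemma cz_subst:
  assumes "j < n" "k < n" "j \<noteq> k" "c < n" "t < n" "c \<noteq> t"
  shows "good n (\<lambda>y. czf j k (cn c t y))"
proof -
  consider "j = t \<and> k = c" | "j = c \<and> k = t" | "j = t \<and> k \<noteq> c" | "k = t \<and> j \<noteq> c" | "j \<noteq> t \<and> k \<noteq> t"
    by blast
  then show ?thesis
  proof cases
    case 1
    have "czf j k (cn c t y) = czf t c y * \<i> ^ (2 * (if y c then 1 else 0))" for y
      using 1 assms by (cases "y t"; cases "y c") (auto simp: cn_def czf_def)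
    then show ?thesis by (simp only:) (intro good_mult cz_good atom_good; use assms in auto)
  next
    case 2
    have "czf j k (cn c t y) = czf c t y * \<i> ^ (2 * (if y c then 1 else 0))" for y
      using 2 assms by (cases "y t"; cases "y c") (auto simp: cn_def czf_def)
    then show ?thesis by (simp only:) (intro good_mult cz_good atom_good; use assms in auto)
  next
    case 3
    have "czf j k (cn c t y) = czf t k y * czf c k y" for y
      using 3 assms by (cases "y t"; cases "y c"; cases "y k") (auto simp: cn_def czf_def)
    then show ?thesis by (simp only:) (intro good_mult cz_good; use assms 3 in auto)
  next
    case 4
    have "czf j k (cn c t y) = czf j t y * czf j c y" for y
      using 4 assms by (cases "y t"; cases "y c"; cases "y j") (auto simp: cn_def czf_def)
    then show ?thesis by (simp only:) (intro good_mult cz_good; use assms 4 in auto)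
  next
    case 5
    have "czf j k (cn c t y) = czf j k y" for y
      using 5 by (auto simp: cn_def czf_def)
    then show ?thesis by (simp only:) (intro cz_good; use assms in auto)
  qed
qed

lemma czl_subst:
  assumes "vl n zs" "c < n" "t < n" "c \<noteq> t"
  shows "good n (\<lambda>y. czl zs (cn c t y))"
  using assms(1)
proof (induction zs)
  case Nil then show ?case by (simp add: good_one)
next
  case (Cons g zs)
  obtain j k where g: "g = (j,k)" by (cases g)
  show ?case using Cons g assms
    by (auto simp: vl_def intro!: good_mult cz_subst)
qed

lemma good_subst_cn:
  assumes "good n \<phi>" "c < n" "t < n" "c \<noteq> t"
  shows "good n (\<lambda>y. \<phi> (cn c t y))"
proof -
  obtain a zs where h: "\<forall>j<n. a j < 4" "vl n zs" "\<forall>y\<in>basis n. \<phi> y = pph n a y * czl zs y"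
    using assms(1) unfolding good_def by blast
  have "good n (\<lambda>y. pph n a (cn c t y) * czl zs (cn c t y))"
    unfolding pph_def
    by (intro good_mult good_prod allI impI atom_subst czl_subst) (use assms h in auto)
  then show ?thesis
    by (rule good_ext) (use h(3) cn_basis assms in auto)
qed

lemma good_subst_cnl:
  "vl n gs \<Longrightarrow> good n \<phi> \<Longrightarrow> good n (\<lambda>y. \<phi> (cnl gs y))"
proof (induction gs arbitrary: \<phi>)
  case Nil then show ?case by simp
next
  case (Cons g gs)
  obtain c t where g: "g = (c,t)" by (cases g)
  have "good n (\<lambda>y. \<phi> (cn c t y))"
    using Cons.prems g by (intro good_subst_cn) (auto simp: vl_def)
  then have "good n (\<lambda>y. \<phi> (cn c t (cnl gs y)))"
    using Cons.IH[of "\<lambda>y. \<phi> (cn c t y)"] Cons.prems by (simp add: vl_def)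
  then show ?case using g by simp
qed

lemma pph_good: "\<forall>j<n. a j < 4 \<Longrightarrow> good n (pph n a)"
  unfolding good_def by (intro exI[of _ a] exI[of _ "[]"]) (simp add: vl_def)

lemma main:
  assumes "\<forall>j<k. is_P_layer n (L j)" "\<forall>j<k. is_C_layer n (C j)"
  shows "\<exists>gs \<phi>. vl n gs \<and> good n \<phi> \<and> op_eq n (PC_prod n L C k) (mop (cnl gs) \<phi>)"
  using assms
proof (induction k)
  case 0
  show ?case
    by (intro exI[of _ "[]"] exI[of _ "\<lambda>_. 1"])
       (simp add: vl_def good_one op_eq_def op_id_def mop_def)
next
  case (Suc k)
  then obtain gs \<phi> where ih: "vl n gs" "good n \<phi>" "op_eq n (PC_prod n L C k) (mop (cnl gs) \<phi>)"
    by auto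
  obtain a' where a': "\<forall>j<n. a' j < 4" "L k = P_layer n a'"
    using Suc.prems(1) unfolding is_P_layer_def by auto
  obtain gs' where gs': "vl n gs'" "C k = gate_prod n (map (\<lambda>(c,t). CNOT c t) gs')"
    using Suc.prems(2) unfolding is_C_layer_def vl_def by auto
  let ?\<psi> = "\<lambda>y. pph n a' (cnl gs y) * \<phi> y"
  have bs: "\<forall>y\<in>basis n. cnl gs y \<in> basis n" using cnl_basis ih(1) by blast
  have e1: "op_eq n (op_mult n (L k) (PC_prod n L C k)) (mop (id \<circ> cnl gs) ?\<psi>)"
    using op_eq_trans[OF op_eq_mult[OF op_eq_refl ih(3)] op_eq_mult_mop[OF bs, of id "pph n a'" \<phi>]]
    by (simp add: a' P_mop)
  have bs2: "\<forall>y\<in>basis n. (id \<circ> cnl gs) y \<in> basis n" using bs by simp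
  have e2: "op_eq n (PC_prod n L C (Suc k)) (mop (cnl gs' \<circ> (id \<circ> cnl gs)) (\<lambda>y. 1 * ?\<psi> y))"
    using op_eq_trans[OF op_eq_mult[OF cnot_sem[OF gs'(1)] e1] op_eq_mult_mop[OF bs2, of "cnl gs'" "\<lambda>_. 1" ?\<psi>]]
    by (simp add: gs'(2))
  have "good n (\<lambda>y. 1 * ?\<psi> y)"
    using good_mult[OF good_subst_cnl[OF ih(1) pph_good[OF a'(1)]] ih(2)] by simp
  moreover have "vl n (gs' @ gs)" using ih(1) gs'(1) by (auto simp: vl_def)
  ultimately show ?case using e2 by (intro exI[of _ "gs' @ gs"] exI[of _ "\<lambda>y. 1 * ?\<psi> y"]) (simp add: cnl_append comp_def)
qed

theorem theorem1:
  fixes n m :: nat and L C :: "nat \<Rightarrow> op"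
  assumes "n \<ge> 1" and "m \<ge> 1"
    and "\<forall>k<m. is_P_layer n (L k)"
    and "\<forall>k<m. is_C_layer n (C k)"
  shows "\<exists>L' Z' C'. is_P_layer n L' \<and> is_CZ_layer n Z' \<and> is_C_layer n C' \<and>
           op_eq n (PC_prod n L C m) (op_mult n C' (op_mult n Z' L'))"
proof -
  obtain gs \<phi> where h: "vl n gs" "good n \<phi>" "op_eq n (PC_prod n L C m) (mop (cnl gs) \<phi>)"
    using main assms(3,4) by blast
  obtain a zs where g: "\<forall>j<n. a j < 4" "vl n zs" "\<forall>y\<in>basis n. \<phi> y = pph n a y * czl zs y"
    using h(2) unfolding good_def by blast
  let ?C = "gate_prod n (map (\<lambda>(c,t). CNOT c t) gs)"
  let ?Z = "gate_prod n (map (\<lambda>(j,k). CZ j k) zs)"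
  let ?L = "P_layer n a"
  have i1: "op_eq n (op_mult n ?Z ?L) (mop (id \<circ> id) (\<lambda>y. czl zs (id y) * pph n a y))"
    using op_eq_trans[OF op_eq_mult[OF cz_sem op_eq_refl] op_eq_mult_mop[of n id id "czl zs" "pph n a"]]
    by (simp add: P_mop)
  have i2: "op_eq n (op_mult n ?C (op_mult n ?Z ?L)) (mop (cnl gs \<circ> (id \<circ> id)) (\<lambda>y. 1 * (czl zs (id y) * pph n a y)))"
    using op_eq_trans[OF op_eq_mult[OF cnot_sem[OF h(1)] i1] op_eq_mult_mop[of n "id \<circ> id" "cnl gs" "\<lambda>_. 1"]]
    by simp
  have i3: "op_eq n (mop (cnl gs) \<phi>) (mop (cnl gs \<circ> (id \<circ> id)) (\<lambda>y. 1 * (czl zs (id y) * pph n a y)))"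
    using g(3) by (simp add: op_eq_mop_cong mult.commute)
  have fin: "op_eq n (PC_prod n L C m) (op_mult n ?C (op_mult n ?Z ?L))"
    using h(3) i3 i2 unfolding op_eq_def by simp
  show ?thesis
    apply (rule exI[of _ ?L], rule exI[of _ ?Z], rule exI[of _ ?C])
    apply (intro conjI fin)
    using g h(1) unfolding is_P_layer_def is_CZ_layer_def is_C_layer_def vl_def by auto
qed

end
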